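(* Let $S=(v_1,\ldots,v_n)$ be an $(n,k)$-uframe, fix an index $i\in[n]$ with $|v_i|<1$, let $v\in\mathbb{R}^k$, and let $S'$ be obtained from $S$ by replacing $v_i$ with $v$. Then $S'$ is an $(n,k)$-frame and $$\det B_{S'}=\sqrt{\frac{1+|B_{S\setminus i}v_i|^2}{1+|B_{S\setminus i}v|^2}}.$$
   Context: An $(n,k)$-frame is an ordered $n$-tuple of vectors in $\mathbb{R}^k$ spanning $\mathbb{R}^k$. For a tuple $T=(w_j)$ of vectors in $\mathbb{R}^k$, $A_T=\sum_j w_j\otimes w_j=\sum_j w_jw_j^T$; if $A_T$ is positive definite, $B_T=A_T^{-1/2}$. An $(n,k)$-uframe is a frame $S$ with $A_S=I_k$. $S\setminus i$ denotes the tuple $(v_j)_{j\in[n],\,j\neq i}$. $|\cdot|$ is the Euclidean norm. *)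

theory Defs
  imports "HOL-Analysis.Analysis"
begin

text \<open>Tuples of vectors are functions from indices to vectors in real^'k; the
  tuple is indexed by a finite index set I (for an (n,k)-tuple, I = {..<n}).\<close>

definition outer :: "real^'k \<Rightarrow> real^'k^'k" where
  "outer w = (\<chi> a b. w $ a * w $ b)"

definition frameA :: "nat set \<Rightarrow> (nat \<Rightarrow> real^'k) \<Rightarrow> real^'k^'k" where
  "frameA I w = (\<Sum>j\<in>I. outer (w j))"

definition pos_def_mat :: "real^'k^'k \<Rightarrow> bool" where
  "pos_def_mat M \<longleftrightarrow> transpose M = M \<and> (\<forall>x. x \<noteq> 0 \<longrightarrow> x \<bullet> (M *v x) > 0)"

definition mat_sqrt :: "real^'k^'k \<Rightarrow> real^'k^'k" where
  "mat_sqrt A = (THE M. pos_def_mat M \<and> M ** M = A)"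

definition frameB :: "nat set \<Rightarrow> (nat \<Rightarrow> real^'k) \<Rightarrow> real^'k^'k" where
  "frameB I w = matrix_inv (mat_sqrt (frameA I w))"

definition is_frame :: "nat \<Rightarrow> (nat \<Rightarrow> real^'k) \<Rightarrow> bool" where
  "is_frame n S \<longleftrightarrow> span (S ` {..<n}) = UNIV"

definition is_uframe :: "nat \<Rightarrow> (nat \<Rightarrow> real^'k) \<Rightarrow> bool" where
  "is_uframe n S \<longleftrightarrow> is_frame n S \<and> frameA {..<n} S = mat 1"

end

theory Submission
  imports Defs
begin

lemma mat_eq_on_span:
  fixes X Y :: "real^'k^'k"
  assumes "\<And>b. b \<in> B \<Longrightarrow> X *v b = Y *v b" "x \<in> span B"
  shows "X *v x = Y *v x"
  using linear_eq_on_span[of "(*v) X" "(*v) Y", OF matrix_vector_mul_linear matrix_vector_mul_linear] assms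
  by blast

lemma sym_inner: 
  fixes A :: "real^'k^'k"
  assumes "transpose A = A"
  shows "x \<bullet> (A *v y) = (A *v x) \<bullet> y"
  by (metis assms dot_lmul_matrix vector_transpose_matrix)

lemma mat_eq_inner:
  fixes X Y :: "real^'k^'k"
  assumes "\<And>x y. x \<bullet> (X *v y) = x \<bullet> (Y *v y)"
  shows "X = Y"
proof -
  have "X *v y = Y *v y" for y
  proof -
    have "(X *v y - Y *v y) \<bullet> (X *v y - Y *v y) = 0"
      using assms[of "X *v y - Y *v y" y] by (simp only: inner_diff_right)
    then show ?thesis by simp
  qed
  then show ?thesis by (simp add: matrix_eq)
qed

lemma outer_mv: "outer w *v x = (w \<bullet> x) *\<^sub>R w"
  by (simp add: outer_def vec_eq_iff matrix_vector_mult_def inner_vec_def sum_distrib_left mult_ac)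

lemma outer_transpose: "transpose (outer w) = outer w"
  by (simp add: outer_def transpose_def vec_eq_iff mult.commute)

lemma sum_mv: "finite I \<Longrightarrow> (\<Sum>j\<in>I. M j) *v x = (\<Sum>j\<in>I. M j *v x)"
  by (induction I rule: finite_induct) (auto simp: matrix_vector_mult_add_rdistrib)

lemma frameA_mv: "finite I \<Longrightarrow> frameA I w *v x = (\<Sum>j\<in>I. (w j \<bullet> x) *\<^sub>R w j)"
  by (simp add: frameA_def sum_mv outer_mv)

lemma frameA_quad: "finite I \<Longrightarrow> x \<bullet> (frameA I w *v x) = (\<Sum>j\<in>I. (w j \<bullet> x)\<^sup>2)"
  by (simp add: frameA_mv inner_sum_right power2_eq_square inner_commute)

lemma transpose_sum: "finite I \<Longrightarrow> transpose (\<Sum>j\<in>I. M j) = (\<Sum>j\<in>I. transpose (M j))"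
  by (induction I rule: finite_induct) (auto simp: transpose_def vec_eq_iff)

lemma frameA_sym: "finite I \<Longrightarrow> transpose (frameA I w) = frameA I w"
  by (simp add: frameA_def transpose_sum outer_transpose)

lemma inv_props:
  fixes A :: "real^'k^'k"
  assumes "invertible A"
  shows "A ** matrix_inv A = mat 1" "matrix_inv A ** A = mat 1"
proof -
  have "\<exists>A'. A ** A' = mat 1 \<and> A' ** A = mat 1" using assms by (simp add: invertible_def)
  from someI_ex[OF this] show "A ** matrix_inv A = mat 1" "matrix_inv A ** A = mat 1"
    by (simp_all add: matrix_inv_def)
qed

lemma inv_unique:
  fixes A X Y :: "real^'k^'k"
  assumes "X ** A = mat 1" "A ** Y = mat 1"
  shows "X = Y"
  by (metis assms matrix_mul_assoc matrix_mul_lid matrix_mul_rid)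

lemma inv_sym:
  fixes A :: "real^'k^'k"
  assumes "invertible A" "transpose A = A"
  shows "transpose (matrix_inv A) = matrix_inv A"
proof -
  have "transpose (matrix_inv A) ** A = mat 1"
    using inv_props(1)[OF assms(1)] by (metis assms(2) matrix_transpose_mul transpose_mat)
  then show ?thesis using inv_unique inv_props(1)[OF assms(1)] by blast
qed

lemma det_inv:
  fixes A :: "real^'k^'k"
  assumes "invertible A"
  shows "det (matrix_inv A) = 1 / det A"
proof -
  have "det A * det (matrix_inv A) = 1" using inv_props(1)[OF assms] det_mul by (metis det_I)
  then have "det A \<noteq> 0" by auto
  then show ?thesis using \<open>det A * det (matrix_inv A) = 1\<close> by (simp add: eq_divide_eq mult.commute)
qed

lemma mv_scale: "(A::real^'k^'k) *v (c *\<^sub>R x) = c *\<^sub>R (A *v x)"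
  by (simp add: vec_eq_iff matrix_vector_mult_def sum_distrib_left mult_ac)

lemma quad_zero:
  fixes a C :: real
  assumes "\<forall>t. 0 \<le> 2*t*a + t^2 * C" "C \<ge> 0" "a \<ge> 0"
  shows "a = 0"
proof (rule ccontr)
  assume "a \<noteq> 0"
  then have ap: "a > 0" using assms by auto
  define t where "t = - a / (C + 2)"
  have "0 \<le> 2*t*a + t^2 * C" using assms(1) by blast
  also have "2*t*a + t^2 * C = t * (2*a + t*C)" by (simp add: power2_eq_square algebra_simps)
  also have "2*a + t*C = a * (C + 4) / (C+2)" using assms(2) by (simp add: t_def field_simps)
  finally have "0 \<le> t * (a * (C + 4) / (C+2))" .
  moreover have "t < 0" using ap assms(2) by (simp add: t_def)
  moreover have "a * (C + 4) / (C+2) > 0" using ap assms(2) by simp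
  ultimately show False using mult_neg_pos[of t "a * (C + 4) / (C+2)"] by linarith
qed

lemma quad_aux:
  fixes a l q p C r F t :: real
  assumes "a = l*q - p" "C = l*a - r" "F = l + 2*t*p + t^2*r" "F \<le> l*(1+2*t*q+t^2*a)"
  shows "0 \<le> 2*t*a + t^2*C"
proof -
  have h: "2*t*a = 2*t*l*q - 2*t*p" unfolding assms(1) by (simp add: algebra_simps)
  show ?thesis using h assms(3,4) unfolding assms(2) by (simp add: algebra_simps power2_eq_square)
qed

lemma cont_quad: "continuous_on K (\<lambda>x::real^'k. x \<bullet> (A *v x))"
  by (intro continuous_intros linear_continuous_on matrix_vector_mul_bounded_linear)

lemma eig_exists:
  fixes A :: "real^'k^'k"
  assumes sym: "transpose A = A" and sV: "subspace V" and nz: "V \<noteq> {0}"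
    and inv: "\<And>x. x \<in> V \<Longrightarrow> A *v x \<in> V"
  shows "\<exists>x\<in>V. norm x = 1 \<and> A *v x = (x \<bullet> (A *v x)) *\<^sub>R x"
proof -
  define f where "f x = x \<bullet> (A *v x)" for x
  define K where "K = sphere (0::real^'k) 1 \<inter> V"
  have cK: "compact K" unfolding K_def
    by (intro compact_Int_closed compact_sphere closed_subspace sV)
  obtain y where y: "y \<in> V" "y \<noteq> 0" using nz sV subspace_0 by blast
  have "y /\<^sub>R norm y \<in> K" using y sV by (simp add: K_def subspace_scale)
  then have neK: "K \<noteq> {}" by blast
  obtain x0 where x0: "x0 \<in> K" and mx: "\<And>y. y \<in> K \<Longrightarrow> f y \<le> f x0"
    using continuous_attains_sup[OF cK neK cont_quad[of K A]] unfolding f_def by blast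
  define l where "l = f x0"
  have x0V: "x0 \<in> V" and nx0: "norm x0 = 1" using x0 by (auto simp: K_def)
  have x0x0: "x0 \<bullet> x0 = 1" using nx0 by (simp add: dot_square_norm)
  have bound: "f y \<le> l * (y \<bullet> y)" if "y \<in> V" for y
  proof (cases "y = 0")
    case True then show ?thesis by (simp add: f_def)
  next
    case False
    have "y /\<^sub>R norm y \<in> K" using that False sV by (simp add: K_def subspace_scale)
    then have "f (y /\<^sub>R norm y) \<le> l" using mx l_def by blast
    moreover have "f (y /\<^sub>R norm y) = f y / (norm y)^2"
      by (simp add: f_def mv_scale power2_eq_square divide_inverse mult_ac)
    ultimately have "f y / (norm y)^2 \<le> l" by simp
    then show ?thesis using False by (simp add: dot_square_norm field_simps)
  qed
  define z where "z = l *\<^sub>R x0 - A *v x0"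
  have zV: "z \<in> V" unfolding z_def using sV x0V inv by (simp add: subspace_diff subspace_scale)
  define a where "a = z \<bullet> z"
  define C where "C = l * (z \<bullet> z) - f z"
  have C0: "C \<ge> 0" using bound[OF zV] by (simp add: C_def)
  have symz: "x0 \<bullet> (A *v z) = z \<bullet> (A *v x0)" using sym_inner[OF sym, of x0 z] by (simp add: inner_commute)
  have "0 \<le> 2*t*a + t^2 * C" for t
  proof -
    have yV: "x0 + t *\<^sub>R z \<in> V" using sV x0V zV by (simp add: subspace_add subspace_scale)
    have e1: "f (x0 + t *\<^sub>R z) = l + 2*t*(z \<bullet> (A *v x0)) + t^2 * f z"
    proof -
      have "A *v (x0 + t *\<^sub>R z) = A *v x0 + t *\<^sub>R (A *v z)"
        by (simp add: matrix_vector_right_distrib mv_scale)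
      then have "f (x0 + t *\<^sub>R z) = x0 \<bullet> (A *v x0) + t * (x0 \<bullet> (A *v z)) + t * (z \<bullet> (A *v x0)) + t * t * (z \<bullet> (A *v z))"
        unfolding f_def by (simp add: inner_add_left inner_add_right distrib_left)
      then show ?thesis using symz by (simp add: l_def f_def power2_eq_square)
    qed
    have e2: "(x0 + t *\<^sub>R z) \<bullet> (x0 + t *\<^sub>R z) = 1 + 2*t*(x0 \<bullet> z) + t^2 * (z \<bullet> z)"
      using x0x0 by (simp add: inner_add_left inner_add_right power2_eq_square inner_commute)
    have e3: "a = l * (x0 \<bullet> z) - z \<bullet> (A *v x0)"
      unfolding a_def by (simp add: z_def inner_diff_left inner_commute)
    have e4: "C = l * a - f z" by (simp add: C_def a_def)
    show ?thesis using quad_aux[OF e3 e4, of "f (x0 + t *\<^sub>R z)" t] bound[OF yV] e1 e2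
      by (simp add: a_def)
  qed
  then have "a = 0" using quad_zero[of a C] C0 by (simp add: a_def)
  then have "z = 0" by (simp add: a_def)
  then have "A *v x0 = l *\<^sub>R x0" by (simp add: z_def)
  then show ?thesis using x0V nx0 l_def f_def by auto
qed

lemma eigbasis_sub:
  fixes A :: "real^'k^'k"
  assumes sym: "transpose A = A"
  shows "subspace V \<Longrightarrow> (\<forall>x\<in>V. A *v x \<in> V) \<Longrightarrow> \<exists>B. B \<subseteq> V \<and> finite B \<and>
     (\<forall>b\<in>B. norm b = 1 \<and> A *v b = (b \<bullet> (A *v b)) *\<^sub>R b) \<and> pairwise orthogonal B \<and> V \<subseteq> span B"
proof (induction "dim V" arbitrary: V rule: less_induct)
  case less
  show ?case
  proof (cases "V = {0}")
    case True
    then show ?thesis by (intro exI[of _ "{}"]) auto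
  next
    case False
    obtain x0 where x0V: "x0 \<in> V" and nx0: "norm x0 = 1" and ex0: "A *v x0 = (x0 \<bullet> (A *v x0)) *\<^sub>R x0"
      using eig_exists[OF sym less.prems(1) False] less.prems(2) by blast
    define l where "l = x0 \<bullet> (A *v x0)"
    have x0x0: "x0 \<bullet> x0 = 1" using nx0 by (simp add: dot_square_norm)
    define W where "W = V \<inter> {y. x0 \<bullet> y = 0}"
    have sW: "subspace W" unfolding W_def
      by (intro subspace_inter less.prems(1) subspace_hyperplane)
    have iW: "\<forall>y\<in>W. A *v y \<in> W"
    proof
      fix y assume y: "y \<in> W"
      have "x0 \<bullet> (A *v y) = (A *v x0) \<bullet> y" using sym_inner[OF sym] by blast
      also have "\<dots> = l * (x0 \<bullet> y)" using ex0 l_def by (metis inner_scaleR_left)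
      also have "\<dots> = 0" using y by (simp add: W_def)
      finally show "A *v y \<in> W" using y less.prems(2) by (simp add: W_def)
    qed
    have "x0 \<notin> W" using x0x0 by (simp add: W_def)
    then have "W \<subset> V" using x0V W_def by blast
    then have "span W \<subset> span V" using sW less.prems(1) by (metis span_eq_iff)
    then have "dim W < dim V" by (rule dim_psubset)
    then obtain B' where B': "B' \<subseteq> W" "finite B'"
      "\<forall>b\<in>B'. norm b = 1 \<and> A *v b = (b \<bullet> (A *v b)) *\<^sub>R b" "pairwise orthogonal B'" "W \<subseteq> span B'"
      using less.hyps[OF _ sW iW] by blast
    define B where "B = insert x0 B'"
    have "B \<subseteq> V" using B'(1) x0V by (auto simp: B_def W_def)
    moreover have "finite B" using B'(2) by (simp add: B_def)
    moreover have "\<forall>b\<in>B. norm b = 1 \<and> A *v b = (b \<bullet> (A *v b)) *\<^sub>R b"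
      using B'(3) nx0 ex0 by (simp add: B_def)
    moreover have "pairwise orthogonal B"
      unfolding B_def pairwise_insert using B'(1,4)
      by (auto simp: W_def orthogonal_def inner_commute)
    moreover have "V \<subseteq> span B"
    proof
      fix z assume z: "z \<in> V"
      define w where "w = z - (x0 \<bullet> z) *\<^sub>R x0"
      have "w \<in> W" using z x0V less.prems(1) x0x0
        by (simp add: W_def w_def subspace_diff subspace_scale inner_diff_right)
      then have "w \<in> span B" using B'(5) span_mono[of B' B] by (auto simp: B_def)
      moreover have "x0 \<in> span B" by (simp add: B_def span_base)
      ultimately have "w + (x0 \<bullet> z) *\<^sub>R x0 \<in> span B" by (intro span_add span_scale)
      then show "z \<in> span B" by (simp add: w_def)
    qed
    ultimately show ?thesis by blast
  qed
qed

lemma eigbasis: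
  fixes A :: "real^'k^'k"
  assumes sym: "transpose A = A"
  shows "\<exists>B. finite B \<and> (\<forall>b\<in>B. norm b = 1 \<and> A *v b = (b \<bullet> (A *v b)) *\<^sub>R b) \<and> pairwise orthogonal B \<and> span B = UNIV"
  using eigbasis_sub[OF sym, of UNIV] by auto

lemma pd_inj:
  fixes M :: "real^'k^'k"
  assumes "pos_def_mat M"
  shows "inj ((*v) M)"
proof (rule injI)
  fix x y assume "M *v x = M *v y"
  then have "M *v (x - y) = 0" by (simp add: matrix_vector_mult_diff_distrib)
  then have "(x - y) \<bullet> (M *v (x - y)) = 0" by simp
  then show "x = y" using assms unfolding pos_def_mat_def by (metis less_irrefl right_minus_eq)
qed

lemma pd_det_nz:
  fixes M :: "real^'k^'k"
  assumes "pos_def_mat M"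
  shows "det M \<noteq> 0"
  using det_nz_iff_inj_gen[OF matrix_vector_mul_linear_gen, of M] pd_inj[OF assms]
  by (simp add: matrix_of_matrix_vector_mul)

lemma pd_invertible:
  fixes M :: "real^'k^'k"
  assumes "pos_def_mat M"
  shows "invertible M"
  using pd_det_nz[OF assms] by (simp add: invertible_det_nz)

lemma sqrt_on_eig:
  fixes N A :: "real^'k^'k"
  assumes pd: "pos_def_mat N" and sq: "N ** N = A" and eb: "A *v b = l *\<^sub>R b" and l0: "l \<ge> 0"
  shows "N *v b = sqrt l *\<^sub>R b"
proof -
  define s where "s = sqrt l"
  have s0: "s \<ge> 0" and ss: "s * s = l" using l0 by (auto simp: s_def)
  define y where "y = N *v b - s *\<^sub>R b"
  have "N *v y = A *v b - s *\<^sub>R (N *v b)"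
    by (simp add: y_def matrix_vector_mult_diff_distrib mv_scale matrix_vector_mul_assoc sq[symmetric])
  then have "N *v y + s *\<^sub>R y = 0"
    by (simp add: y_def eb ss[symmetric] algebra_simps scaleR_diff_right)
  then have "N *v y = - s *\<^sub>R y" by (simp add: eq_neg_iff_add_eq_0)
  then have "y \<bullet> (N *v y) = - s * (y \<bullet> y)" by simp
  moreover have "s * (y \<bullet> y) \<ge> 0" using s0 by simp
  ultimately have "\<not> (y \<bullet> (N *v y) > 0)" by linarith
  then have "y = 0" using pd unfolding pos_def_mat_def by blast
  then show ?thesis by (simp add: y_def s_def)
qed

lemma sqrt_ex1:
  fixes A :: "real^'k^'k"
  assumes pd: "pos_def_mat A"
  shows "\<exists>!M. pos_def_mat M \<and> M ** M = A"
proof -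
  have sym: "transpose A = A" using pd by (simp add: pos_def_mat_def)
  obtain B where fB: "finite B" and eB: "\<forall>b\<in>B. norm b = 1 \<and> A *v b = (b \<bullet> (A *v b)) *\<^sub>R b"
    and oB: "pairwise orthogonal B" and sB: "span B = UNIV"
    using eigbasis[OF sym] by blast
  define lam where "lam b = b \<bullet> (A *v b)" for b
  have lpos: "lam b > 0" if "b \<in> B" for b
  proof -
    have "b \<noteq> 0" using eB that by auto
    then show ?thesis using pd by (simp add: pos_def_mat_def lam_def)
  qed
  have bb: "b \<bullet> b = 1" if "b \<in> B" for b using eB that by (simp add: dot_square_norm)
  have bc: "b \<bullet> c = 0" if "b \<in> B" "c \<in> B" "b \<noteq> c" for b c
    using oB that unfolding pairwise_def orthogonal_def by blast
  define M where "M = (\<Sum>b\<in>B. sqrt (lam b) *\<^sub>R outer b)"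
  have Mx: "M *v x = (\<Sum>b\<in>B. (sqrt (lam b) * (b \<bullet> x)) *\<^sub>R b)" for x
    unfolding M_def by (simp add: sum_mv[OF fB] scaleR_matrix_vector_assoc[symmetric] outer_mv)
  have Mb: "M *v c = sqrt (lam c) *\<^sub>R c" if c: "c \<in> B" for c
  proof -
    have "M *v c = (\<Sum>b\<in>B. if b = c then sqrt (lam c) *\<^sub>R c else 0)"
      unfolding Mx by (rule sum.cong) (auto simp: bc bb c)
    also have "\<dots> = sqrt (lam c) *\<^sub>R c" using fB c by simp
    finally show ?thesis .
  qed
  have Mq: "x \<bullet> (M *v x) = (\<Sum>b\<in>B. sqrt (lam b) * (b \<bullet> x)\<^sup>2)" for x
    unfolding Mx by (simp add: inner_sum_right power2_eq_square inner_commute mult_ac)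
  have Msym: "transpose M = M"
    unfolding M_def by (simp add: transpose_sum[OF fB] transpose_scalar outer_transpose)
  have Mpd: "pos_def_mat M"
    unfolding pos_def_mat_def
  proof (intro conjI Msym allI impI)
    fix x :: "real^'k" assume x: "x \<noteq> 0"
    have "\<exists>b\<in>B. b \<bullet> x \<noteq> 0"
    proof (rule ccontr)
      assume "\<not> ?thesis"
      then have "orthogonal x y" if "y \<in> B" for y using that by (auto simp: orthogonal_def inner_commute)
      then have "orthogonal x x" using orthogonal_to_span[of x B x] sB by auto
      then show False using x by (simp add: orthogonal_def)
    qed
    then obtain b where b: "b \<in> B" "b \<bullet> x \<noteq> 0" by blast
    have "0 < (\<Sum>b\<in>B. sqrt (lam b) * (b \<bullet> x)\<^sup>2)"
      by (rule sum_pos2[OF fB b(1)]) (use b lpos in \<open>auto intro!: mult_nonneg_nonneg\<close>, meson less_imp_le lpos real_sqrt_ge_zero)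
    then show "x \<bullet> (M *v x) > 0" using Mq by simp
  qed
  have MM: "M ** M = A"
  proof -
    have "(M ** M) *v x = A *v x" for x
    proof (rule mat_eq_on_span[of B])
      fix b assume b: "b \<in> B"
      have "(M ** M) *v b = M *v (M *v b)" by (simp add: matrix_vector_mul_assoc)
      also have "\<dots> = (sqrt (lam b) * sqrt (lam b)) *\<^sub>R b" using b by (simp add: Mb mv_scale)
      also have "\<dots> = lam b *\<^sub>R b" using lpos[OF b] by simp
      also have "\<dots> = A *v b" using eB b lam_def by simp
      finally show "(M ** M) *v b = A *v b" .
    qed (simp add: sB)
    then show ?thesis by (simp add: matrix_eq)
  qed
  have uniq: "N = M" if "pos_def_mat N" "N ** N = A" for N
  proof -
    have "N *v x = M *v x" for x
    proof (rule mat_eq_on_span[of B])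
      fix b assume b: "b \<in> B"
      have "N *v b = sqrt (lam b) *\<^sub>R b"
        using sqrt_on_eig[OF that, of b "lam b"] eB b lpos[OF b] lam_def by auto
      then show "N *v b = M *v b" using Mb b by simp
    qed (simp add: sB)
    then show ?thesis by (simp add: matrix_eq)
  qed
  show ?thesis using Mpd MM uniq by blast
qed

lemma mat_sqrt_props:
  fixes A :: "real^'k^'k"
  assumes pd: "pos_def_mat A"
  shows "pos_def_mat (mat_sqrt A)" "mat_sqrt A ** mat_sqrt A = A"
  using theI'[OF sqrt_ex1[OF pd]] unfolding mat_sqrt_def by auto

lemma pd_det_pos:
  fixes A :: "real^'k^'k"
  assumes pd: "pos_def_mat A"
  shows "det A > 0"
proof -
  have "det A = det (mat_sqrt A) * det (mat_sqrt A)"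
    using mat_sqrt_props[OF pd] det_mul by metis
  moreover have "det (mat_sqrt A) \<noteq> 0" using pd_det_nz mat_sqrt_props(1)[OF pd] by blast
  ultimately show ?thesis by (simp add: not_square_less_zero less_le)
qed

definition rank1 :: "real^'k \<Rightarrow> real^'k \<Rightarrow> real^'k^'k" where
  "rank1 a b = (\<chi> r c. a $ r * b $ c)"

lemma det_base:
  fixes b :: "real^'k"
  shows "det (\<chi> r. if r = i then b else axis r 1) = b $ i"
proof -
  have "transpose (\<chi> r. if r = i then b else axis r 1) =
        (\<chi> r c. if c = i then b $ r else (mat 1 :: real^'k^'k) $ r $ c)"
    by (simp add: transpose_def vec_eq_iff axis_def mat_def)
  note e = this
  have "det (\<chi> r. if r = i then b else axis r 1) = det (transpose (\<chi> r. if r = i then b else axis r 1))"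
    by (rule det_transpose[symmetric])
  also have "\<dots> = det (\<chi> r c. if c = i then b $ r else (mat 1 :: real^'k^'k) $ r $ c)"
    by (simp only: e)
  also have "\<dots> = b $ i" using cramer_lemma[of i "mat 1 :: real^'k^'k" b]
    by (simp only: matrix_vector_mul_lid det_I mult_1_right)
  finally show ?thesis .
qed

lemma det_L1:
  fixes a b :: "real^'k"
  assumes "finite J" "i \<notin> J"
  shows "det (\<chi> r. if r = i then b else if r \<in> J then axis r 1 + a $ r *s b else axis r 1) = b $ i"
  using assms
proof (induction J rule: finite_induct)
  case empty
  show ?case unfolding empty_iff if_False by (rule det_base)
next
  case (insert j J)
  have ij: "i \<noteq> j" using insert by auto
  define c where "c r = (if r = i then b else if r \<in> J then axis r 1 + a $ r *s b else axis r 1)" for r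
  have "(\<chi> r. if r = i then b else if r \<in> insert j J then axis r 1 + a $ r *s b else axis r 1)
      = (\<chi> r. if r = j then axis j 1 + a $ j *s b else c r)"
    using ij by (simp add: vec_eq_iff c_def)
  moreover have "det (\<chi> r. if r = j then axis j 1 else c r) = b $ i"
  proof -
    have "(\<chi> r. if r = j then axis j 1 else c r) = (\<chi> r. if r = i then b else if r \<in> J then axis r 1 + a $ r *s b else axis r 1)"
      using ij insert.hyps by (simp add: vec_eq_iff c_def)
    then show ?thesis using insert by simp
  qed
  moreover have "det (\<chi> r. if r = j then a $ j *s b else c r) = 0"
  proof -
    have "det (\<chi> r. if r = j then a $ j *s b else c r) = a $ j * det (\<chi> r. if r = j then b else c r)"
      by (rule det_row_mul)
    moreover have "det (\<chi> r. if r = j then b else c r) = 0"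
      by (rule det_identical_rows[OF ij]) (use ij in \<open>simp add: row_def c_def vec_eq_iff\<close>)
    ultimately show ?thesis by simp
  qed
  ultimately show ?case by (simp add: det_row_add)
qed

lemma det_L2:
  fixes a b :: "real^'k"
  assumes "finite J"
  shows "det (\<chi> r. if r \<in> J then axis r 1 + a $ r *s b else axis r 1) = 1 + (\<Sum>r\<in>J. a $ r * b $ r)"
  using assms
proof (induction J rule: finite_induct)
  case empty
  have "(\<chi> r. axis r 1) = (mat 1 :: real^'k^'k)" by (simp add: vec_eq_iff axis_def mat_def)
  then show ?case by simp
next
  case (insert i J)
  define c where "c r = (if r \<in> J then axis r 1 + a $ r *s b else axis r 1)" for r
  have "(\<chi> r. if r \<in> insert i J then axis r 1 + a $ r *s b else axis r 1)
      = (\<chi> r. if r = i then axis i 1 + a $ i *s b else c r)"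
    by (simp add: vec_eq_iff c_def)
  moreover have "(\<chi> r. if r = i then axis i 1 else c r) = (\<chi> r. if r \<in> J then axis r 1 + a $ r *s b else axis r 1)"
    using insert.hyps by (simp add: vec_eq_iff c_def)
  moreover have "det (\<chi> r. if r = i then a $ i *s b else c r) = a $ i * b $ i"
  proof -
    have "det (\<chi> r. if r = i then a $ i *s b else c r) = a $ i * det (\<chi> r. if r = i then b else c r)"
      by (rule det_row_mul)
    moreover have "det (\<chi> r. if r = i then b else c r) = b $ i"
      unfolding c_def using det_L1[OF insert.hyps(1,2), of b a] by simp
    ultimately show ?thesis by simp
  qed
  ultimately show ?case using insert by (simp add: det_row_add)
qed

lemma det_rank1: "det (mat 1 + rank1 a b) = 1 + a \<bullet> (b :: real^'k)"
proof -
  have "mat 1 + rank1 a b = (\<chi> r. if r \<in> UNIV then axis r 1 + a $ r *s b else axis r 1)"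
    by (simp add: vec_eq_iff rank1_def axis_def mat_def)
  then show ?thesis using det_L2[of UNIV a b] by (simp add: inner_vec_def)
qed

lemma normB:
  fixes A :: "real^'k^'k"
  assumes pd: "pos_def_mat A" and w: "A *v w = x"
  shows "(norm (matrix_inv (mat_sqrt A) *v x))\<^sup>2 = x \<bullet> w"
proof -
  define R where "R = mat_sqrt A"
  have Rpd: "pos_def_mat R" and RR: "R ** R = A" using mat_sqrt_props[OF pd] by (auto simp: R_def)
  have Rinv: "matrix_inv R ** R = mat 1" using inv_props(2)[OF pd_invertible[OF Rpd]] .
  have Rs: "transpose R = R" using Rpd by (simp add: pos_def_mat_def)
  have "matrix_inv R *v x = R *v w"
  proof -
    have "matrix_inv R *v x = matrix_inv R *v (R *v (R *v w))"
      using w RR by (simp add: matrix_vector_mul_assoc)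
    also have "\<dots> = (matrix_inv R ** R) *v (R *v w)" by (simp only: matrix_vector_mul_assoc matrix_mul_assoc)
    also have "\<dots> = R *v w" using Rinv by simp
    finally show ?thesis .
  qed
  then have "(norm (matrix_inv R *v x))\<^sup>2 = (R *v w) \<bullet> (R *v w)" by (simp add: dot_square_norm)
  also have "\<dots> = w \<bullet> (R *v (R *v w))" using sym_inner[OF Rs, of w "R *v w"] by simp
  also have "\<dots> = w \<bullet> x" using w RR by (simp add: matrix_vector_mul_assoc)
  finally show ?thesis by (simp add: R_def inner_commute)
qed

lemma mult_rank1: "(X :: real^'k^'k) ** rank1 a b = rank1 (X *v a) b"
  by (simp add: rank1_def matrix_matrix_mult_def matrix_vector_mult_def vec_eq_iff sum_distrib_right sum_distrib_left mult_ac)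

lemma outer_rank1: "outer v = rank1 v v"
  by (simp add: outer_def rank1_def)

lemma det_sqrt_eq:
  fixes A :: "real^'k^'k"
  assumes pd: "pos_def_mat A"
  shows "det (mat_sqrt A) = sqrt (det A)"
proof -
  have "det A = det (mat_sqrt A) * det (mat_sqrt A)"
    using mat_sqrt_props[OF pd] det_mul by metis
  moreover have "det (mat_sqrt A) > 0" using pd_det_pos mat_sqrt_props(1)[OF pd] by blast
  ultimately show ?thesis using real_sqrt_mult_self[of "det (mat_sqrt A)"] by simp
qed

theorem lemma5:
  fixes S :: "nat \<Rightarrow> real^'k" and v :: "real^'k" and n i :: nat
  assumes "is_uframe n S" and "i < n" and "norm (S i) < 1"
  shows "is_frame n (S(i := v)) \<and>
    det (frameB {..<n} (S(i := v))) =
      sqrt ((1 + (norm (frameB ({..<n} - {i}) S *v S i))\<^sup>2) /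
            (1 + (norm (frameB ({..<n} - {i}) S *v v))\<^sup>2))"
proof -
  define I where "I = {..<n}"
  define I' where "I' = I - {i}"
  define u where "u = S i"
  define S' where "S' = S(i := v)"
  have fI: "finite I" and fI': "finite I'" and iI: "i \<in> I" using assms(2) by (auto simp: I_def I'_def)
  have AS: "frameA I S = mat 1" using assms(1) by (simp add: is_uframe_def I_def)
  define M where "M = frameA I' S"
  have AS2: "frameA I S = M + outer u"
    unfolding M_def frameA_def I'_def u_def using sum.remove[OF fI iI, of "\<lambda>j. outer (S j)"] by (simp add: add.commute)
  have AS'2: "frameA I S' = M + outer v"
  proof -
    have "frameA I S' = outer v + (\<Sum>j\<in>I'. outer (S' j))"
      unfolding frameA_def I'_def using sum.remove[OF fI iI, of "\<lambda>j. outer (S' j)"] by (simp add: S'_def)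
    also have "(\<Sum>j\<in>I'. outer (S' j)) = M"
      unfolding M_def frameA_def by (rule sum.cong) (auto simp: S'_def I'_def)
    finally show ?thesis by (simp add: add.commute)
  qed
  define c where "c = u \<bullet> u"
  have c0: "c \<ge> 0" and c1: "c < 1"
    using assms(3) by (auto simp: c_def u_def dot_square_norm power_less_one_iff abs_less_iff)
  have Mdef: "M = mat 1 - outer u" using AS AS2 by (metis add_diff_cancel)
  have Mx: "M *v x = x - (u \<bullet> x) *\<^sub>R u" for x
    by (simp add: Mdef matrix_vector_mult_diff_rdistrib outer_mv)
  have Mq: "x \<bullet> (M *v x) = x \<bullet> x - (u \<bullet> x)\<^sup>2" for x
    by (simp add: Mx inner_diff_right power2_eq_square inner_commute)
  have Msym: "transpose M = M" unfolding M_def by (rule frameA_sym[OF fI'])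
  have Mpd: "pos_def_mat M"
    unfolding pos_def_mat_def
  proof (intro conjI Msym allI impI)
    fix x :: "real^'k" assume x: "x \<noteq> 0"
    have xx: "x \<bullet> x > 0" using x by simp
    have "(u \<bullet> x)\<^sup>2 \<le> (u \<bullet> u) * (x \<bullet> x)"
      by (rule Cauchy_Schwarz_ineq)
    also have "\<dots> = c * (x \<bullet> x)" by (simp add: c_def)
    also have "\<dots> < 1 * (x \<bullet> x)" by (rule mult_strict_right_mono[OF c1 xx])
    finally show "x \<bullet> (M *v x) > 0" unfolding Mq by simp
  qed
  define A' where "A' = M + outer v"
  have A'sym: "transpose A' = A'"
  proof -
    have "transpose A' = transpose M + transpose (outer v)"
      by (simp add: A'_def transpose_def vec_eq_iff)
    then show ?thesis using Msym by (simp add: outer_transpose A'_def)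
  qed
  have A'pd: "pos_def_mat A'"
    unfolding pos_def_mat_def
  proof (intro conjI A'sym allI impI)
    fix x :: "real^'k" assume x: "x \<noteq> 0"
    have "x \<bullet> (A' *v x) = x \<bullet> (M *v x) + (v \<bullet> x)\<^sup>2"
      by (simp add: A'_def matrix_vector_mult_add_rdistrib outer_mv inner_add_right power2_eq_square inner_commute)
    moreover have "x \<bullet> (M *v x) > 0" using Mpd x by (simp add: pos_def_mat_def)
    ultimately show "x \<bullet> (A' *v x) > 0" by (simp add: add_pos_nonneg)
  qed
  have frame: "is_frame n S'"
  proof (rule ccontr)
    assume nf: "\<not> is_frame n S'"
    have "dim (S' ` I) < DIM(real^'k)"
      using nf dim_eq_full[of "S' ` I"] dim_subset_UNIV[of "S' ` I"] by (simp add: is_frame_def I_def)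
    then obtain x :: "real^'k" where x: "x \<noteq> 0" and ox: "\<And>y. y \<in> span (S' ` I) \<Longrightarrow> orthogonal x y"
      by (rule orthogonal_to_subspace_exists) blast
    have "S' j \<bullet> x = 0" if j: "j \<in> I" for j
    proof -
      have "S' j \<in> span (S' ` I)" using j by (intro span_base imageI)
      then have "orthogonal x (S' j)" by (rule ox)
      then show ?thesis by (simp add: orthogonal_def inner_commute)
    qed
    then have "x \<bullet> (frameA I S' *v x) = 0" by (simp add: frameA_quad[OF fI])
    moreover have "x \<bullet> (frameA I S' *v x) > 0" using A'pd x AS'2 by (simp add: pos_def_mat_def A'_def)
    ultimately show False by simp
  qed
  define wu where "wu = (1 / (1 - c)) *\<^sub>R u"
  have Mwu: "M *v wu = u"
  proof -
    have "M *v wu = wu - (c / (1 - c)) *\<^sub>R u" by (simp add: Mx wu_def c_def)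
    also have "\<dots> = u" using c1 by (simp add: wu_def scaleR_diff_left[symmetric] field_simps)
    finally show ?thesis .
  qed
  have fB: "frameB I' S = matrix_inv (mat_sqrt M)" unfolding frameB_def M_def ..
  have uwu: "u \<bullet> wu = c / (1 - c)" by (simp add: wu_def c_def)
  have Bu: "(norm (frameB I' S *v u))\<^sup>2 = c / (1 - c)"
    using normB[OF Mpd Mwu] unfolding fB uwu .
  define wv where "wv = matrix_inv M *v v"
  have Mwv: "M *v wv = v" using inv_props(1)[OF pd_invertible[OF Mpd]]
    by (simp add: wv_def matrix_vector_mul_assoc)
  define q where "q = v \<bullet> wv"
  have Bv: "(norm (frameB I' S *v v))\<^sup>2 = q"
    using normB[OF Mpd Mwv] unfolding fB q_def .
  have q0: "q \<ge> 0" using Bv by (metis zero_le_power2)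
  have detM: "det M = 1 - c"
  proof -
    have "M = mat 1 + rank1 (- u) u" by (simp add: Mdef outer_rank1 rank1_def vec_eq_iff)
    then have "det M = 1 + (- u) \<bullet> u" by (simp only: det_rank1)
    then show ?thesis by (simp add: c_def)
  qed
  have detA': "det A' = (1 - c) * (1 + q)"
  proof -
    have "A' = M ** (mat 1 + rank1 wv v)"
      unfolding A'_def matrix_add_ldistrib matrix_mul_rid mult_rank1 Mwv outer_rank1 ..
    then have "det A' = det M * det (mat 1 + rank1 wv v)" by (simp only: det_mul)
    also have "\<dots> = (1 - c) * (1 + q)" unfolding detM det_rank1 q_def by (simp add: inner_commute)
    finally show ?thesis .
  qed
  have inv': "invertible (mat_sqrt A')" by (rule pd_invertible[OF mat_sqrt_props(1)[OF A'pd]])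
  have detB: "det (frameB I S') = 1 / sqrt ((1 - c) * (1 + q))"
  proof -
    have "det (frameB I S') = det (matrix_inv (mat_sqrt A'))" by (simp only: frameB_def AS'2 A'_def)
    also have "\<dots> = 1 / det (mat_sqrt A')" by (rule det_inv[OF inv'])
    also have "\<dots> = 1 / sqrt (det A')" by (simp only: det_sqrt_eq[OF A'pd])
    also have "\<dots> = 1 / sqrt ((1 - c) * (1 + q))" by (simp only: detA')
    finally show ?thesis .
  qed
  have fin: "sqrt ((1 + c / (1 - c)) / (1 + q)) = 1 / sqrt ((1 - c) * (1 + q))"
  proof -
    have "(1 + c / (1 - c)) / (1 + q) = 1 / ((1 - c) * (1 + q))" using c1 q0 by (simp add: field_simps)
    then show ?thesis by (simp add: real_sqrt_divide)
  qed
  have G: "det (frameB I S') = sqrt ((1 + (norm (frameB I' S *v u))\<^sup>2) / (1 + (norm (frameB I' S *v v))\<^sup>2))"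
    unfolding Bu Bv detB by (rule fin[symmetric])
  have "is_frame n (S(i := v)) \<and>
    det (frameB {..<n} (S(i := v))) =
      sqrt ((1 + (norm (frameB ({..<n} - {i}) S *v S i))\<^sup>2) /
            (1 + (norm (frameB ({..<n} - {i}) S *v v))\<^sup>2))"
    using G frame by (simp only: S'_def I_def I'_def u_def)
  then show ?thesis .
qed

end
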